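(* Let $t,x\in\mathbb{C}$ with $x\ne t$, $t\notin\{0,1\}$ and $x\notin\{0,1\}$. For $s\in\mathbb{C}\setminus\{0,1,x\}$ let $$g(s)=\begin{pmatrix}-(s-1)x & ts(s-1)\\ -(s-x) & s(s-x)\end{pmatrix}\in\mathrm{PGL}_2(\mathbb{C}).$$ Then the elements $g(s)$, $s\in\mathbb{C}\setminus\{0,1,x\}$, generate a dense subgroup of $\mathrm{PGL}_2(\mathbb{C})$. *)

theory Defs
  imports "HOL-Analysis.Analysis"
begin

type_synonym cmat2 = "complex^2^2"

definition gmat :: "complex \<Rightarrow> complex \<Rightarrow> complex \<Rightarrow> cmat2" where
  "gmat t x z = (\<chi> i j. if i = 1 then (if j = 1 then -(z-1)*x else t*z*(z-1))
                                 else (if j = 1 then -(z-x) else z*(z-x)))"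

definition GL2 :: "cmat2 set" where
  "GL2 = {A. invertible A}"

inductive_set gen_subgroup :: "cmat2 set \<Rightarrow> cmat2 set" for S where
  unit: "mat 1 \<in> gen_subgroup S"
| gen: "g \<in> S \<Longrightarrow> g \<in> gen_subgroup S"
| mult: "a \<in> gen_subgroup S \<Longrightarrow> b \<in> gen_subgroup S \<Longrightarrow> a ** b \<in> gen_subgroup S"
| inv: "a \<in> gen_subgroup S \<Longrightarrow> matrix_inv a \<in> gen_subgroup S"

definition proj_rel :: "(cmat2 \<times> cmat2) set" where
  "proj_rel = {(A, B). A \<in> GL2 \<and> B \<in> GL2 \<and> (\<exists>c::complex. c \<noteq> 0 \<and> B = mat c ** A)}"

definition PGL2 :: "cmat2 set set" where
  "PGL2 = GL2 // proj_rel"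

definition proj :: "cmat2 \<Rightarrow> cmat2 set" where
  "proj A = proj_rel `` {A}"

definition PGL2_top :: "cmat2 set topology" where
  "PGL2_top = topology (\<lambda>U. U \<subseteq> PGL2 \<and> openin (top_of_set GL2) (\<Union>U))"

end

theory Submission
  imports Defs
begin


definition mk :: "complex \<Rightarrow> complex \<Rightarrow> complex \<Rightarrow> complex \<Rightarrow> cmat2" where
  "mk a b c d = (\<chi> i j. if i = 1 then (if j = 1 then a else b) else (if j = 1 then c else d))"

lemma two_ne: "(2::2) \<noteq> 1" by simp

lemma mk_nth[simp]: "mk a b c d $ 1 $ 1 = a" "mk a b c d $ 1 $ 2 = b"
  "mk a b c d $ 2 $ 1 = c" "mk a b c d $ 2 $ 2 = d"
  by (simp_all add: mk_def)

lemma mk_eta: "A = mk (A$1$1) (A$1$2) (A$2$1) (A$2$2)"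
  unfolding vec_eq_iff forall_2 by simp

lemma mk_eq_iff: "mk a b c d = mk a' b' c' d' \<longleftrightarrow> a = a' \<and> b = b' \<and> c = c' \<and> d = d'"
  by (metis mk_nth)

lemma mk_mult: "mk a b c d ** mk a' b' c' d' = mk (a*a'+b*c') (a*b'+b*d') (c*a'+d*c') (c*b'+d*d')"
  unfolding vec_eq_iff forall_2 by (simp add: matrix_matrix_mult_def sum_2)

lemma mat_mk: "mat k = mk k 0 0 k"
  unfolding vec_eq_iff forall_2 by (simp add: mat_def)

lemma gmat_mk: "gmat t x z = mk (-(z-1)*x) (t*z*(z-1)) (-(z-x)) (z*(z-x))"
  unfolding vec_eq_iff forall_2 by (simp add: gmat_def)

lemma mk_inv_eq: assumes "a*d - b*c \<noteq> 0"
  shows "matrix_inv (mk a b c d) = mk (d/(a*d-b*c)) (-b/(a*d-b*c)) (-c/(a*d-b*c)) (a/(a*d-b*c))"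
proof -
  let ?A = "mk a b c d" and ?B = "mk (d/(a*d-b*c)) (-b/(a*d-b*c)) (-c/(a*d-b*c)) (a/(a*d-b*c))"
  obtain D where D: "D = a*d-b*c" "D \<noteq> 0" using assms by blast
  have e: "a*d - b*c = D" "d*a - c*b = D" "d*a-b*c = D" "a*d-c*b = D" using D by (auto simp: algebra_simps)
  have AB: "?A ** ?B = mat 1" unfolding mat_mk mk_mult mk_eq_iff D(1)[symmetric] using D(2)
    by (auto simp: field_simps e)
  have BA: "?B ** ?A = mat 1" unfolding mat_mk mk_mult mk_eq_iff D(1)[symmetric] using D(2)
    by (auto simp: field_simps e)
  define C where "C = matrix_inv ?A"
  have "?A ** C = mat 1 \<and> C ** ?A = mat 1"
    unfolding C_def matrix_inv_def by (rule someI[of _ ?B]) (use AB BA in auto)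
  then have "C = C ** (?A ** ?B)" using AB by (simp add: matrix_mul_rid)
  also have "\<dots> = (C ** ?A) ** ?B" by (simp add: matrix_mul_assoc)
  also have "\<dots> = ?B" using \<open>?A ** C = mat 1 \<and> C ** ?A = mat 1\<close> by (simp add: matrix_mul_lid)
  finally show ?thesis unfolding C_def .
qed

lemma mk_invertible: assumes "a*d - b*c \<noteq> 0" shows "invertible (mk a b c d)"
proof -
  let ?A = "mk a b c d" and ?B = "mk (d/(a*d-b*c)) (-b/(a*d-b*c)) (-c/(a*d-b*c)) (a/(a*d-b*c))"
  obtain D where D: "D = a*d-b*c" "D \<noteq> 0" using assms by blast
  have e: "a*d - b*c = D" "d*a - c*b = D" "d*a-b*c = D" "a*d-c*b = D" using D by (auto simp: algebra_simps)
  have AB: "?A ** ?B = mat 1" unfolding mat_mk mk_mult mk_eq_iff D(1)[symmetric] using D(2)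
    by (auto simp: field_simps e)
  have BA: "?B ** ?A = mat 1" unfolding mat_mk mk_mult mk_eq_iff D(1)[symmetric] using D(2)
    by (auto simp: field_simps e)
  show ?thesis unfolding invertible_def using AB BA by blast
qed



definition HH :: "complex \<Rightarrow> complex \<Rightarrow> cmat2 set" where
  "HH t x = gen_subgroup (gmat t x ` (UNIV - {0, 1, x}))"

definition inG :: "complex \<Rightarrow> complex \<Rightarrow> complex \<Rightarrow> complex \<Rightarrow> complex \<Rightarrow> complex \<Rightarrow> bool" where
  "inG t x a b c d \<longleftrightarrow> (\<exists>k. k \<noteq> 0 \<and> mk (k*a) (k*b) (k*c) (k*d) \<in> HH t x)"

lemma inG_one: "inG t x 1 0 0 1"
  unfolding inG_def HH_def using gen_subgroup.unit[of "gmat t x ` (UNIV - {0, 1, x})"]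
  by (intro exI[of _ 1]) (simp add: mat_mk)

lemma inG_g: "s \<notin> {0,1,x} \<Longrightarrow> inG t x (-(s-1)*x) (t * s * (s-1)) (-(s-x)) (s * (s-x))"
  unfolding inG_def HH_def
  by (intro exI[of _ 1]) (auto intro!: gen_subgroup.gen simp: gmat_mk)

lemma inG_mult:
  assumes "inG t x a b c d" "inG t x a' b' c' d'"
  shows "inG t x (a*a'+b*c') (a*b'+b*d') (c*a'+d*c') (c*b'+d*d')"
proof -
  obtain k where k: "k \<noteq> 0" "mk (k*a) (k*b) (k*c) (k*d) \<in> HH t x" using assms(1) inG_def by auto
  obtain k' where k': "k' \<noteq> 0" "mk (k'*a') (k'*b') (k'*c') (k'*d') \<in> HH t x" using assms(2) inG_def by auto
  have "mk (k*a) (k*b) (k*c) (k*d) ** mk (k'*a') (k'*b') (k'*c') (k'*d') \<in> HH t x"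
    using k(2) k'(2) unfolding HH_def by (rule gen_subgroup.mult)
  moreover have "mk (k*a) (k*b) (k*c) (k*d) ** mk (k'*a') (k'*b') (k'*c') (k'*d') =
     mk ((k*k')*(a*a'+b*c')) ((k*k')*(a*b'+b*d')) ((k*k')*(c*a'+d*c')) ((k*k')*(c*b'+d*d'))"
    unfolding mk_mult mk_eq_iff by (simp add: algebra_simps)
  ultimately show ?thesis unfolding inG_def using k k' by (intro exI[of _ "k*k'"]) simp
qed

lemma inG_inv:
  assumes "inG t x a b c d" "a*d - b*c \<noteq> 0"
  shows "inG t x d (-b) (-c) a"
proof -
  obtain k where k: "k \<noteq> 0" "mk (k*a) (k*b) (k*c) (k*d) \<in> HH t x" using assms(1) inG_def by auto
  have D: "(k*a)*(k*d) - (k*b)*(k*c) = k*k*(a*d-b*c)" by (simp add: algebra_simps)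
  have nz: "(k*a)*(k*d) - (k*b)*(k*c) \<noteq> 0" unfolding D using k assms by simp
  have "matrix_inv (mk (k*a) (k*b) (k*c) (k*d)) \<in> HH t x"
    using k(2) unfolding HH_def by (rule gen_subgroup.inv)
  moreover have "matrix_inv (mk (k*a) (k*b) (k*c) (k*d)) =
     mk ((1/(k*(a*d-b*c)))*d) ((1/(k*(a*d-b*c)))*(-b)) ((1/(k*(a*d-b*c)))*(-c)) ((1/(k*(a*d-b*c)))*a)"
    unfolding mk_inv_eq[OF nz] D mk_eq_iff using k assms by (simp add: field_simps)
  ultimately show ?thesis unfolding inG_def using k assms by (intro exI[of _ "1/(k*(a*d-b*c))"]) simp
qed

lemma inG_cong:
  assumes "inG t x a b c d" "k \<noteq> 0" "a = k*a'" "b = k*b'" "c = k*c'" "d = k*d'"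
  shows "inG t x a' b' c' d'"
proof -
  obtain k0 where k0: "k0 \<noteq> 0" "mk (k0*a) (k0*b) (k0*c) (k0*d) \<in> HH t x" using assms(1) inG_def by auto
  show ?thesis unfolding inG_def using k0 assms by (intro exI[of _ "k0*k"]) (simp add: mult.assoc)
qed

lemma inG_diag: "inG t x p 0 0 q \<Longrightarrow> q \<noteq> 0 \<Longrightarrow> inG t x (p/q) 0 0 1"
  by (erule inG_cong[where k=q]) auto



lemma W_word:
  fixes x l a :: complex
  assumes l: "l \<noteq> 0" "l \<noteq> 1" and x: "x \<noteq> 0" "x \<noteq> 1" and a: "a \<notin> {0,1,x}"
    and nl: "a \<noteq> l" "a \<noteq> x*l" and bd: "(1-l)*a + l - x \<noteq> 0" and bn: "(1-x*l)*a + x*(l-1) \<noteq> 0"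
  shows "inG (x*(l^2-l+1)/l) x (x*(a-l)*((1-l)*a + l - x)) 0 0 (l*(a-x*l)*((1-x*l)*a + x*(l-1)))"
proof -
  define t where "t = x*(l^2-l+1)/l"
  define c where "c = a/l"
  define B where "B = (1-l)*a + l - x"
  define N where "N = (1-x*l)*a + x*(l-1)"
  define b where "b = N/B"
  have c: "c \<notin> {0,1,x}" using a l nl unfolding c_def by (auto simp: field_simps)
  have e1: "N - B = l*(1-x)*(a-1)" unfolding N_def B_def by (simp add: algebra_simps)
  have e2: "N - x*B = (1-x)*(a-x)" unfolding N_def B_def by (simp add: algebra_simps)
  have B0: "B \<noteq> 0" "N \<noteq> 0" using bd bn unfolding B_def N_def by auto
  have "b \<noteq> 0" using B0 unfolding b_def by simp
  moreover have "b \<noteq> 1"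
  proof
    assume "b = 1" then have "N - B = 0" using B0 unfolding b_def by (simp add: field_simps)
    then show False using e1 a l x by simp
  qed
  moreover have "b \<noteq> x"
  proof
    assume "b = x" then have "N - x*B = 0" using B0 unfolding b_def by (simp add: field_simps)
    then show False using e2 a l x by simp
  qed
  ultimately have b: "b \<notin> {0,1,x}" by simp
  have tx: "t - x = x*(l-1)^2/l" unfolding t_def using l by (simp add: field_simps power2_eq_square)
  have det: "(-(a-1)*x)*(a*(a-x)) - (t * a * (a-1))*(-(a-x)) \<noteq> 0"
  proof -
    have "(-(a-1)*x)*(a*(a-x)) - (t * a * (a-1))*(-(a-x)) = a*(a-1)*(a-x)*(t-x)" by (simp add: algebra_simps)
    then show ?thesis using a l x tx by auto
  qed
  have G1: "inG t x (-(c-1)*x) (t * c * (c-1)) (-(c-x)) (c * (c-x))" using inG_g[OF c] .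
  have G2: "inG t x (a * (a-x)) (-(t * a * (a-1))) (-(-(a-x))) (-(a-1)*x)"
    using inG_inv[OF inG_g det] a by simp
  have G3: "inG t x (-(b-1)*x) (t * b * (b-1)) (-(b-x)) (b * (b-x))" using inG_g[OF b] .
  have M1: "inG t x (-x*(a-x)*(a-l)) (x^2*(a-1)*(l^2-l+1)*(a-l)) (-(a-x)*l*(a-x*l)) (x*l^2*(a-1)*(a-x*l))"
    apply (rule inG_cong[OF inG_mult[OF G1 G2], where k="a*(l-1)/l^3"])
    using a l unfolding c_def t_def by (auto simp: field_simps power2_eq_square power3_eq_cube) (algebra?)
  have G3': "inG t x (-(N-B)*x*B*l) (x*(l^2-l+1)*N*(N-B)) (-(N-x*B)*B*l) (N*(N-x*B)*l)"
    apply (rule inG_cong[OF G3, where k="1/(B^2*l)"])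
    using l B0 unfolding b_def t_def by (auto simp: field_simps power2_eq_square)
  have "inG t x (x*(a-l)*B) 0 0 (l*(a-x*l)*N)"
    apply (rule inG_cong[OF inG_mult[OF M1 G3'], where k="x*(a-1)*(a-x)*(x-1)*l*(l-1)^2"])
    subgoal using a l x by simp
    unfolding B_def N_def by algebra+
  then show ?thesis unfolding t_def B_def N_def .
qed



lemma quad_fact:
  fixes A B C :: complex
  assumes "A \<noteq> 0"
  shows "\<exists>r1 r2. r1 + r2 = -B/A \<and> r1*r2 = C/A \<and> (\<forall>z. A*z^2 + B*z + C = A*(z-r1)*(z-r2))"
proof -
  define s where "s = csqrt (B^2 - 4*A*C)"
  have s2: "s^2 = B^2 - 4*A*C" unfolding s_def by simp
  define r1 where "r1 = (-B + s)/(2*A)"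
  define r2 where "r2 = (-B - s)/(2*A)"
  have sum: "r1 + r2 = -B/A" unfolding r1_def r2_def using assms by (simp add: field_simps)
  have prod: "r1*r2 = C/A"
  proof -
    have "r1*r2 = (B^2 - s^2)/(4*A^2)" unfolding r1_def r2_def using assms
      by (simp add: field_simps power2_eq_square)
    also have "\<dots> = C/A" unfolding s2 using assms by (simp add: field_simps power2_eq_square)
    finally show ?thesis .
  qed
  have "\<forall>z. A*z^2 + B*z + C = A*(z-r1)*(z-r2)"
  proof
    fix z
    have "A*(z-r1)*(z-r2) = A*z^2 - A*(r1+r2)*z + A*(r1*r2)" by (simp add: algebra_simps power2_eq_square)
    also have "\<dots> = A*z^2 + B*z + C" unfolding sum prod using assms by simp
    finally show "A*z^2 + B*z + C = A*(z-r1)*(z-r2)" by simp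
  qed
  then show ?thesis using sum prod by blast
qed

lemma quad_roots_finite:
  fixes A B C :: complex
  assumes "A \<noteq> 0"
  shows "finite {z. A*z^2 + B*z + C = 0}"
proof -
  obtain r1 r2 where "\<forall>z. A*z^2 + B*z + C = A*(z-r1)*(z-r2)" using quad_fact[OF assms] by blast
  then have "{z. A*z^2 + B*z + C = 0} \<subseteq> {r1, r2}" using assms by auto
  then show ?thesis by (rule finite_subset) simp
qed

lemma two_roots:
  fixes n2 n1 n0 r1 r2 :: complex
  assumes "n2*r1^2+n1*r1+n0 = 0" "n2*r2^2+n1*r2+n0 = 0" "r1 \<noteq> r2"
  shows "n2*z^2+n1*z+n0 = n2*(z-r1)*(z-r2)"
proof -
  have "(n2*(r1+r2) + n1)*(r1-r2) = (n2*r1^2+n1*r1+n0) - (n2*r2^2+n1*r2+n0)"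
    by (simp add: algebra_simps power2_eq_square)
  then have "(n2*(r1+r2) + n1)*(r1-r2) = 0" using assms(1,2) by simp
  then have h: "n2*(r1+r2) + n1 = 0" using assms(3) by simp
  have "n1 = (n2*(r1+r2)+n1) - n2*(r1+r2)" by simp
  also have "\<dots> = -n2*(r1+r2)" using h by simp
  finally have e1: "n1 = -n2*(r1+r2)" .
  have "n0 = (n2*r1^2+n1*r1+n0) - n2*r1^2 - n1*r1" by simp
  also have "\<dots> = - n2*r1^2 - n1*r1" using assms(1) by simp
  also have "\<dots> = n2*r1*r2" unfolding e1 by (simp add: algebra_simps power2_eq_square)
  finally have e0: "n0 = n2*r1*r2" .
  show ?thesis unfolding e1 e0 by (simp add: algebra_simps power2_eq_square)
qed

lemma cofinite_ratio:
  fixes n2 n1 n0 d2 d1 d0 z0 :: complex and Bad :: "complex set"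
  assumes n2: "n2 \<noteq> 0" and z0: "n2*z0^2+n1*z0+n0 = 0" "d2*z0^2+d1*z0+d0 \<noteq> 0" and Bad: "finite Bad"
  shows "finite {\<rho>. \<not>(\<exists>z. z \<notin> Bad \<and> d2*z^2+d1*z+d0 \<noteq> 0 \<and> n2*z^2+n1*z+n0 = \<rho> * (d2*z^2+d1*z+d0))}"
proof -
  define Nf where "Nf z = n2*z^2+n1*z+n0" for z
  define Df where "Df z = d2*z^2+d1*z+d0" for z
  define F where "F = {n2/d2} \<union> (\<lambda>r. Nf r / Df r) ` Bad \<union> (\<lambda>r. (2*n2*r+n1)/(2*d2*r+d1)) ` {z. n2*z^2+n1*z+n0 = 0}"
  have "finite F" unfolding F_def using Bad quad_roots_finite[OF n2] by auto
  moreover have "{\<rho>. \<not>(\<exists>z. z \<notin> Bad \<and> d2*z^2+d1*z+d0 \<noteq> 0 \<and> n2*z^2+n1*z+n0 = \<rho> * (d2*z^2+d1*z+d0))} \<subseteq> F"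
  proof
    fix \<rho> assume "\<rho> \<in> {\<rho>. \<not>(\<exists>z. z \<notin> Bad \<and> d2*z^2+d1*z+d0 \<noteq> 0 \<and> n2*z^2+n1*z+n0 = \<rho> * (d2*z^2+d1*z+d0))}"
    then have nogood: "\<And>z. z \<notin> Bad \<Longrightarrow> Df z \<noteq> 0 \<Longrightarrow> Nf z \<noteq> \<rho> * Df z" unfolding Nf_def Df_def by auto
    show "\<rho> \<in> F"
    proof (rule ccontr)
      assume nF: "\<rho> \<notin> F"
      have A: "n2 - \<rho>*d2 \<noteq> 0"
      proof
        assume "n2 - \<rho>*d2 = 0"
        then have "d2 \<noteq> 0" "\<rho> = n2/d2" using n2 by (auto simp: field_simps)
        then show False using nF unfolding F_def by auto
      qed
      obtain r1 r2 where rs: "r1 + r2 = -(n1-\<rho>*d1)/(n2-\<rho>*d2)" "r1*r2 = (n0-\<rho>*d0)/(n2-\<rho>*d2)"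
        "\<forall>z. (n2-\<rho>*d2)*z^2 + (n1-\<rho>*d1)*z + (n0-\<rho>*d0) = (n2-\<rho>*d2)*(z-r1)*(z-r2)"
        using quad_fact[OF A] by blast
      have Q: "Nf z - \<rho> * Df z = (n2-\<rho>*d2)*(z-r1)*(z-r2)" for z
        using rs(3)[rule_format, of z] unfolding Nf_def Df_def by (simp add: algebra_simps)
      have root: "Df r = 0 \<and> Nf r = 0" if "r = r1 \<or> r = r2" for r
      proof -
        have q: "Nf r = \<rho> * Df r" using Q[of r] that by auto
        have "Df r = 0"
        proof (rule ccontr)
          assume D: "Df r \<noteq> 0"
          show False
          proof (cases "r \<in> Bad")
            case True
            then have "\<rho> = Nf r / Df r" using q D by simp
            then show False using nF True unfolding F_def by auto
          next
            case False then show False using nogood[OF False D] q by simp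
          qed
        qed
        then show ?thesis using q by simp
      qed
      show False
      proof (cases "r1 = r2")
        case False
        have "Nf z0 = n2*(z0-r1)*(z0-r2)" unfolding Nf_def
          by (rule two_roots) (use root[of r1] root[of r2] False in \<open>auto simp: Nf_def\<close>)
        then have "z0 = r1 \<or> z0 = r2" using z0(1) n2 unfolding Nf_def by auto
        then show False using root z0(2) unfolding Df_def by auto
      next
        case True
        have Nr: "Nf r1 = 0" and Dr: "Df r1 = 0" using root by auto
        have c1: "n1 - \<rho>*d1 = -2*(n2-\<rho>*d2)*r1" using rs(1) True A by (simp add: field_simps)
        have key: "2*n2*r1 + n1 = \<rho> * (2*d2*r1+d1)" using c1 by (simp add: algebra_simps)
        show False
        proof (cases "2*d2*r1+d1 = 0")
          case False
          then have "\<rho> = (2*n2*r1+n1)/(2*d2*r1+d1)" using key by (simp add: field_simps)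
          moreover have "r1 \<in> {z. n2*z^2+n1*z+n0 = 0}" using Nr unfolding Nf_def by simp
          ultimately show False using nF unfolding F_def by blast
        next
          case True
          then have "2*n2*r1 + n1 = 0" using key by simp
          have "n1 = (2*n2*r1 + n1) - 2*n2*r1" by simp
          also have "\<dots> = -2*n2*r1" using \<open>2*n2*r1 + n1 = 0\<close> by simp
          finally have n1: "n1 = -2*n2*r1" .
          have "d1 = (2*d2*r1 + d1) - 2*d2*r1" by simp
          also have "\<dots> = -2*d2*r1" using True by simp
          finally have d1: "d1 = -2*d2*r1" .
          have n0: "n0 = n2*r1^2" using Nr n1 unfolding Nf_def by (simp add: algebra_simps power2_eq_square)
          have d0: "d0 = d2*r1^2" using Dr d1 unfolding Df_def by (simp add: algebra_simps power2_eq_square)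
          have "n2*(z0-r1)^2 = 0" using z0(1) unfolding n1 n0 by (simp add: algebra_simps power2_eq_square)
          then have "z0 = r1" using n2 by simp
          then show False using z0(2) Dr unfolding Df_def by simp
        qed
      qed
    qed
  qed
  ultimately show ?thesis by (rule finite_subset[rotated])
qed



lemma T_cof:
  fixes x l :: complex
  assumes l: "l \<noteq> 0" "l \<noteq> 1" and x: "x \<noteq> 0" "x \<noteq> 1" and t1: "x*(l^2-l+1) \<noteq> l"
  shows "\<exists>F. finite F \<and> (\<forall>\<rho>. \<rho> \<noteq> 0 \<longrightarrow> \<rho> \<notin> F \<longrightarrow> inG (x*(l^2-l+1)/l) x \<rho> 0 0 1)"
proof -
  define n2 n1 n0 where "n2 = x*(1-l)" and "n1 = x*(l^2-x)" and "n0 = x*l*(x-l)"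
  define d2 d1 d0 where "d2 = l*(1-x*l)" and "d1 = l*x*(x*l^2-1)" and "d0 = -(x^2*l^2*(l-1))"
  have Ne: "x*(a-l)*((1-l)*a + l - x) = n2*a^2+n1*a+n0" for a
    unfolding n2_def n1_def n0_def by (simp add: algebra_simps power2_eq_square)
  have De: "l*(a-x*l)*((1-x*l)*a + x*(l-1)) = d2*a^2+d1*a+d0" for a
    unfolding d2_def d1_def d0_def by (simp add: algebra_simps power2_eq_square)
  have n2: "n2 \<noteq> 0" unfolding n2_def using x l by simp
  have z0N: "n2*l^2+n1*l+n0 = 0" using Ne[of l] by simp
  have z0D: "d2*l^2+d1*l+d0 \<noteq> 0"
  proof -
    have "d2*l^2+d1*l+d0 = l*l*(1-x)*(l - x*(l^2-l+1))" unfolding De[symmetric] by (simp add: algebra_simps power2_eq_square)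
    then show ?thesis using l x t1 by simp
  qed
  define F where "F = {\<rho>. \<not>(\<exists>z. z \<notin> {0,1,x} \<and> d2*z^2+d1*z+d0 \<noteq> 0 \<and> n2*z^2+n1*z+n0 = \<rho> * (d2*z^2+d1*z+d0))}"
  have fF: "finite F" unfolding F_def by (rule cofinite_ratio[OF n2 z0N z0D]) simp
  have "inG (x*(l^2-l+1)/l) x \<rho> 0 0 1" if rho: "\<rho> \<noteq> 0" "\<rho> \<notin> F" for \<rho>
  proof -
    obtain a where a: "a \<notin> {0,1,x}" "d2*a^2+d1*a+d0 \<noteq> 0" "n2*a^2+n1*a+n0 = \<rho> * (d2*a^2+d1*a+d0)"
      using rho(2) unfolding F_def by blast
    have Nn: "x*(a-l)*((1-l)*a + l - x) \<noteq> 0" using a(2,3) rho(1) unfolding Ne by simp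
    have Dn: "l*(a-x*l)*((1-x*l)*a + x*(l-1)) \<noteq> 0" using a(2) unfolding De by simp
    have W: "inG (x*(l^2-l+1)/l) x (x*(a-l)*((1-l)*a + l - x)) 0 0 (l*(a-x*l)*((1-x*l)*a + x*(l-1)))"
      by (rule W_word) (use l x a Nn Dn in auto)
    have "\<rho> = (x*(a-l)*((1-l)*a + l - x)) / (l*(a-x*l)*((1-x*l)*a + x*(l-1)))"
      unfolding Ne De using a(2,3) by simp
    then show ?thesis using inG_diag[OF W Dn] by simp
  qed
  then show ?thesis using fF by blast
qed

lemma T_full:
  assumes "\<exists>F. finite F \<and> (\<forall>\<rho>. \<rho> \<noteq> 0 \<longrightarrow> \<rho> \<notin> F \<longrightarrow> inG t x \<rho> 0 0 1)" "\<rho> \<noteq> 0"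
  shows "inG t x \<rho> 0 0 1"
proof -
  obtain F where F: "finite F" "\<And>\<rho>. \<rho> \<noteq> 0 \<Longrightarrow> \<rho> \<notin> F \<Longrightarrow> inG t x \<rho> 0 0 1" using assms(1) by blast
  have fin: "finite (F \<union> {0} \<union> (\<lambda>f. \<rho>/f) ` F)" using F(1) by simp
  obtain r where r: "r \<notin> F \<union> {0} \<union> (\<lambda>f. \<rho>/f) ` F"
    using ex_new_if_finite[OF infinite_UNIV_char_0 fin] by blast
  have rF: "r \<notin> F" and r0: "r \<noteq> 0" and rI: "r \<notin> (\<lambda>f. \<rho>/f) ` F" using r by simp_all
  have r1: "inG t x r 0 0 1" using F(2)[OF r0 rF] .
  have q0: "\<rho>/r \<noteq> 0" using r0 assms(2) by simp
  have qF: "\<rho>/r \<notin> F"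
  proof
    assume "\<rho>/r \<in> F"
    then have "\<rho>/(\<rho>/r) \<in> (\<lambda>f. \<rho>/f) ` F" by (rule imageI)
    moreover have "\<rho>/(\<rho>/r) = r" using r0 assms(2) by simp
    ultimately show False using rI by simp
  qed
  have r2: "inG t x (\<rho>/r) 0 0 1" using F(2)[OF q0 qF] .
  have "inG t x (r*(\<rho>/r)+0*0) (r*0+0*1) (0*(\<rho>/r)+1*0) (0*0+1*1)" by (rule inG_mult[OF r1 r2])
  then show ?thesis using r0 by simp
qed



lemma inG_eq: "inG t x a b c d \<Longrightarrow> a = a' \<Longrightarrow> b = b' \<Longrightarrow> c = c' \<Longrightarrow> d = d' \<Longrightarrow> inG t x a' b' c' d'"
  by simp

lemma U_one:
  assumes T: "\<And>\<rho>. \<rho> \<noteq> 0 \<Longrightarrow> inG t x \<rho> 0 0 1"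
    and X: "inG t x p q r y" and nz: "p \<noteq> 0" "q \<noteq> 0" "r \<noteq> 0" "y \<noteq> 0" "p*y - q*r \<noteq> 0"
  shows "\<exists>w11 w12 w22. inG t x w11 w12 0 w22 \<and> w12 \<noteq> 0 \<and> w11 * w22 \<noteq> 0"
proof -
  have p2: "p^2 \<noteq> 0" using nz by simp
  have fin: "finite ({0, -q*r/p^2, -y/p} \<union> {z. p^2*z^2 + (q*r+p*y)*z + y^2 = 0})"
    using quad_roots_finite[OF p2] by simp
  obtain \<beta> where b: "\<beta> \<notin> {0, -q*r/p^2, -y/p} \<union> {z. p^2*z^2 + (q*r+p*y)*z + y^2 = 0}"
    using ex_new_if_finite[OF infinite_UNIV_char_0 fin] by blast
  have b0: "\<beta> \<noteq> 0" and bq: "p^2*\<beta>^2 + (q*r+p*y)*\<beta> + y^2 \<noteq> 0" using b by auto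
  have M11: "\<beta>*p^2 + q*r \<noteq> 0"
  proof
    assume "\<beta>*p^2 + q*r = 0"
    then have "\<beta>*p^2 = -(q*r)" by (simp add: eq_neg_iff_add_eq_0)
    then have "\<beta> = -q*r/p^2" using p2 by (simp add: field_simps)
    then show False using b by auto
  qed
  have bs: "\<beta>*p + y \<noteq> 0"
  proof
    assume "\<beta>*p + y = 0"
    then have "\<beta>*p = -y" by (simp add: eq_neg_iff_add_eq_0)
    then have "\<beta> = -y/p" using nz by (simp add: field_simps)
    then show False using b by auto
  qed
  define \<alpha> where "\<alpha> = -y*(\<beta>*p+y)/(\<beta>*p^2+q*r)"
  have a0: "\<alpha> \<noteq> 0" unfolding \<alpha>_def using nz bs M11 by simp
  define M11' M12 M21 M22 where "M11' = \<beta>*p^2 + q*r" and "M12 = q*(\<beta>*p+y)" and "M21 = r*(\<beta>*p+y)" and "M22 = \<beta>*q*r + y^2"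
  have M: "inG t x M11' M12 M21 M22"
    by (rule inG_eq[OF inG_mult[OF inG_mult[OF X T[OF b0]] X]]) (simp_all add: M11'_def M12_def M21_def M22_def algebra_simps power2_eq_square)
  define W11 W12 W22 where "W11 = p*\<alpha>*M11' + q*M21" and "W12 = p*\<alpha>*M12 + q*M22" and "W22 = r*\<alpha>*M12 + y*M22"
  have W: "inG t x W11 W12 0 W22"
    apply (rule inG_eq[OF inG_mult[OF inG_mult[OF X T[OF a0]] M]])
    apply (simp add: W11_def algebra_simps)
    apply (simp add: W12_def algebra_simps)
    subgoal unfolding \<alpha>_def M11'_def M21_def using M11 by (simp add: field_simps)
    apply (simp add: W22_def algebra_simps)
    done
  have W12: "W12 \<noteq> 0"
  proof -
    have "W12 = q*(q*r-p*y)*(p^2*\<beta>^2 + (q*r+p*y)*\<beta> + y^2)/(\<beta>*p^2+q*r)"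
      unfolding W12_def \<alpha>_def M12_def M22_def using M11
      by (simp add: field_simps) (simp add: algebra_simps power2_eq_square)
    then show ?thesis using nz bq M11 by simp
  qed
  have z: "r * \<alpha> * M11' + y * M21 = 0"
    unfolding \<alpha>_def M11'_def M21_def using M11 by (simp add: field_simps)
  have d1: "W11*W22 - W12*(r * \<alpha> * M11' + y * M21) = (p*y-q*r)*\<alpha>*(M11'*M22 - M12*M21)"
    unfolding W11_def W12_def W22_def by (simp add: algebra_simps)
  have d2: "M11'*M22 - M12*M21 = (p*y-q*r)^2*\<beta>"
    unfolding M11'_def M12_def M21_def M22_def by (simp add: algebra_simps power2_eq_square)
  have detW: "W11*W22 - W12*0 = (p*y-q*r)^3*\<alpha>*\<beta>"
    using d1 unfolding z d2 by (simp add: power3_eq_cube power2_eq_square algebra_simps)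
  have "W11*W22 \<noteq> 0" using detW nz a0 b0 by simp
  then show ?thesis using W W12 by blast
qed

lemma U_all:
  assumes T: "\<And>\<rho>. \<rho> \<noteq> 0 \<Longrightarrow> inG t x \<rho> 0 0 1"
    and W: "inG t x w11 w12 0 w22" "w12 \<noteq> 0" "w11 * w22 \<noteq> 0"
  shows "inG t x 1 \<gamma> 0 1"
proof -
  have w: "w11 \<noteq> 0" "w22 \<noteq> 0" using W(3) by auto
  have Wi: "inG t x w22 (-w12) 0 w11" using inG_inv[OF W(1)] W(3) by simp
  have step: "inG t x 1 g 0 1" if g: "g \<noteq> -w12/w22" for g
  proof -
    define d where "d = 1 + g*w22/w12"
    have d0: "d \<noteq> 0"
    proof
      assume "d = 0"
      then have "g*w22 = -w12" unfolding d_def using W(2) by (simp add: field_simps add_eq_0_iff)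
      then have "g = -w12/w22" using w by (simp add: field_simps)
      then show False using g by simp
    qed
    have d1: "inG t x (1/d) 0 0 1" using T d0 by simp
    have C: "inG t x w11 (d*w12) 0 w22"
      by (rule inG_eq[OF inG_mult[OF inG_mult[OF T[OF d0] W(1)] d1]]) (use d0 in simp_all)
    show ?thesis
      apply (rule inG_cong[OF inG_mult[OF C Wi], where k="w11*w22"])
      using w W(2) unfolding d_def by (simp_all add: field_simps)
  qed
  show ?thesis
  proof (cases "\<gamma> = -w12/w22")
    case False then show ?thesis using step by simp
  next
    case True
    then have "\<gamma>/2 \<noteq> -w12/w22" using w W(2) by (simp add: field_simps)
    then have h: "inG t x 1 (\<gamma>/2) 0 1" by (rule step)
    show ?thesis by (rule inG_eq[OF inG_mult[OF h h]]) simp_all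
  qed
qed

lemma all_inG:
  assumes T: "\<And>\<rho>. \<rho> \<noteq> 0 \<Longrightarrow> inG t x \<rho> 0 0 1"
    and U: "\<And>\<gamma>. inG t x 1 \<gamma> 0 1"
    and X: "inG t x p q r y" and r: "r \<noteq> 0" and dX: "p*y - q*r \<noteq> 0"
    and M: "m1*m4 - m2*m3 \<noteq> 0"
  shows "inG t x m1 m2 m3 m4"
proof -
  define e where "e = q - p*y/r"
  have e0: "e \<noteq> 0" unfolding e_def using r dX by (simp add: field_simps)
  have A: "inG t x 0 e r 0"
    by (rule inG_eq[OF inG_mult[OF inG_mult[OF U[of "-p/r"] X] U[of "-y/r"]]])
       (use r in \<open>simp_all add: e_def field_simps\<close>)
  have re: "r/e \<noteq> 0" using r e0 by simp
  have w0: "inG t x 0 1 1 0"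
    apply (rule inG_cong[OF inG_mult[OF T[OF re] A], where k=r])
    using r e0 by simp_all
  have L: "inG t x 1 0 g 1" for g
    by (rule inG_eq[OF inG_mult[OF inG_mult[OF w0 U[of g]] w0]]) simp_all
  have gen: "inG t x n1 n2 n3 n4" if n: "n1 \<noteq> 0" "n1*n4 - n2*n3 \<noteq> 0" for n1 n2 n3 n4
  proof -
    define \<delta> where "\<delta> = (n1*n4 - n2*n3)/n1"
    have d0: "\<delta> \<noteq> 0" unfolding \<delta>_def using n by simp
    have D: "inG t x n1 0 0 \<delta>"
      apply (rule inG_cong[OF T[of "n1/\<delta>"], where k="1/\<delta>"])
      using n d0 by simp_all
    show ?thesis
      by (rule inG_eq[OF inG_mult[OF inG_mult[OF L[of "n3/n1"] D] U[of "n2/n1"]]])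
         (use n in \<open>simp_all add: \<delta>_def field_simps\<close>)
  qed
  show ?thesis
  proof (cases "m1 = 0")
    case False then show ?thesis using gen M by simp
  next
    case True
    then have m3: "m3 \<noteq> 0" using M by auto
    have "m3*m2 - m4*m1 \<noteq> 0" using M by (simp add: algebra_simps)
    then have "inG t x m3 m4 m1 m2" using gen[of m3 m2 m4 m1] m3 by simp
    then show ?thesis by (rule inG_eq[OF inG_mult[OF w0]]) simp_all
  qed
qed



lemma mat_mult_mat: "mat a ** mat b = (mat (a*b) :: cmat2)"
  unfolding mat_mk mk_mult by simp

lemma mat_mk_mult: "mat k ** mk a b c d = mk (k*a) (k*b) (k*c) (k*d)"
  unfolding mat_mk mk_mult by simp

lemma inv_iff_det: "invertible (A::cmat2) \<longleftrightarrow> A$1$1 * A$2$2 - A$1$2 * A$2$1 \<noteq> 0"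
  by (simp add: invertible_det_nz det_2)

lemma invertible_mat: "k \<noteq> 0 \<Longrightarrow> invertible (mat k :: cmat2)"
  unfolding mat_mk by (rule mk_invertible) simp

lemma equiv_proj: "equiv GL2 proj_rel"
proof (rule equivI)
  show "proj_rel \<subseteq> GL2 \<times> GL2" unfolding proj_rel_def by auto
  show "refl_on GL2 proj_rel" unfolding refl_on_def proj_rel_def
    by (auto intro!: exI[of _ 1] simp: matrix_mul_lid)
  show "sym proj_rel" unfolding sym_def proj_rel_def
  proof (clarsimp)
    fix A c assume A: "A \<in> GL2" "mat c ** A \<in> GL2" "c \<noteq> 0"
    have "A = mat (1/c) ** (mat c ** A)" using A(3)
      by (simp add: matrix_mul_assoc mat_mult_mat matrix_mul_lid)
    then show "\<exists>d. d \<noteq> 0 \<and> A = mat d ** (mat c ** A)" using A(3) by (intro exI[of _ "1/c"]) simp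
  qed
  show "trans proj_rel" unfolding trans_def proj_rel_def
  proof (clarsimp)
    fix A :: cmat2 and c d :: complex assume "c \<noteq> 0" "d \<noteq> 0"
    then show "\<exists>e. e \<noteq> 0 \<and> mat d ** (mat c ** A) = mat e ** A"
      by (intro exI[of _ "d*c"]) (simp add: matrix_mul_assoc mat_mult_mat)
  qed
qed

lemma istop: "istopology (\<lambda>U. U \<subseteq> PGL2 \<and> openin (top_of_set GL2) (\<Union>U))"
  unfolding istopology_def
proof (rule conjI; intro allI impI)
  fix S T assume S: "S \<subseteq> PGL2 \<and> openin (top_of_set GL2) (\<Union>S)" and T: "T \<subseteq> PGL2 \<and> openin (top_of_set GL2) (\<Union>T)"
  have "\<Union>(S \<inter> T) = \<Union>S \<inter> \<Union>T"
  proof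
    show "\<Union>S \<inter> \<Union>T \<subseteq> \<Union>(S \<inter> T)"
    proof
      fix z assume "z \<in> \<Union>S \<inter> \<Union>T"
      then obtain X Y where XY: "X \<in> S" "Y \<in> T" "z \<in> X" "z \<in> Y" by blast
      have "X = Y \<or> X \<inter> Y = {}" using quotient_disj[OF equiv_proj] XY S T unfolding PGL2_def by blast
      then show "z \<in> \<Union>(S \<inter> T)" using XY by blast
    qed
  qed blast
  then show "S \<inter> T \<subseteq> PGL2 \<and> openin (top_of_set GL2) (\<Union>(S \<inter> T))" using S T by auto
next
  fix K assume K: "\<forall>U\<in>K. U \<subseteq> PGL2 \<and> openin (top_of_set GL2) (\<Union>U)"
  have "\<Union>(\<Union>K) = \<Union>((\<lambda>U. \<Union>U) ` K)" by blast
  moreover have "openin (top_of_set GL2) (\<Union>((\<lambda>U. \<Union>U) ` K))" using K by auto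
  ultimately show "\<Union>K \<subseteq> PGL2 \<and> openin (top_of_set GL2) (\<Union>(\<Union>K))" using K by auto
qed

lemma topspace_sub: "topspace PGL2_top \<subseteq> PGL2"
  unfolding topspace_def PGL2_top_def topology_inverse'[OF istop] by blast

lemma closure_full:
  assumes "PGL2 \<subseteq> S"
  shows "PGL2_top closure_of S = topspace PGL2_top"
proof
  show "PGL2_top closure_of S \<subseteq> topspace PGL2_top" by (rule closure_of_subset_topspace)
  have "topspace PGL2_top \<inter> S = topspace PGL2_top" using topspace_sub assms by blast
  then show "topspace PGL2_top \<subseteq> PGL2_top closure_of S" using closure_of_subset_Int by metis
qed

lemma PGL2_sub:
  assumes "\<And>A. invertible A \<Longrightarrow> \<exists>k. k \<noteq> 0 \<and> mat k ** A \<in> H"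
  shows "PGL2 \<subseteq> proj ` H"
proof
  fix X assume "X \<in> PGL2"
  then obtain A where A: "X = proj_rel``{A}" "A \<in> GL2" unfolding PGL2_def by (auto elim: quotientE)
  obtain k where k: "k \<noteq> 0" "mat k ** A \<in> H" using assms A(2) unfolding GL2_def by auto
  have "invertible (mat k ** A)" using invertible_mult[OF invertible_mat[OF k(1)]] A(2) unfolding GL2_def by auto
  then have "(A, mat k ** A) \<in> proj_rel" unfolding proj_rel_def using A(2) k(1) unfolding GL2_def by auto
  then have "proj_rel``{A} = proj_rel``{mat k ** A}" by (rule equiv_class_eq[OF equiv_proj])
  then have "X = proj (mat k ** A)" unfolding proj_def A(1) .
  then show "X \<in> proj ` H" using k(2) by blast
qed

lemma exists_l:
  fixes t x :: complex assumes "x \<noteq> 0"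
  shows "\<exists>l. x*l^2 - (t+x)*l + x = 0"
proof -
  define s where "s = csqrt ((t+x)^2 - 4*x^2)"
  have s2: "s^2 = (t+x)^2 - 4*x^2" unfolding s_def by simp
  define l where "l = ((t+x) + s)/(2*x)"
  have "x*l^2 - (t+x)*l + x = (s^2 - (t+x)^2 + 4*x^2)/(4*x)"
    unfolding l_def using assms by (simp add: field_simps power2_eq_square)
  also have "\<dots> = 0" unfolding s2 by simp
  finally show ?thesis by blast
qed

theorem lemma3p10:
  fixes t x :: complex
  assumes "x \<noteq> t" "t \<notin> {0, 1}" "x \<notin> {0, 1}"
  shows "PGL2_top closure_of (proj ` gen_subgroup (gmat t x ` (UNIV - {0, 1, x})))
           = topspace PGL2_top"
proof -
  have x0: "x \<noteq> 0" "x \<noteq> 1" and t0: "t \<noteq> 0" "t \<noteq> 1" using assms by auto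
  obtain l where lq: "x*l^2 - (t+x)*l + x = 0" using exists_l[OF x0(1)] by blast
  have l0: "l \<noteq> 0" using lq x0 by auto
  have tl: "t*l = x*(l^2-l+1)" using lq by (simp add: algebra_simps power2_eq_square)
  have l1: "l \<noteq> 1" using tl assms(1) by auto
  have t_eq: "t = x*(l^2-l+1)/l" using tl l0 by (simp add: field_simps)
  have tl1: "x*(l^2-l+1) \<noteq> l" using tl t0 l0 by auto
  have T: "inG t x \<rho> 0 0 1" if "\<rho> \<noteq> 0" for \<rho>
    using T_full[OF T_cof[OF l0 l1 x0 tl1] that] unfolding t_eq[symmetric] .
  have tv: "t \<notin> {0,1,x}" using assms by auto
  have X: "inG t x (-(t-1)*x) (t * t * (t-1)) (-(t-x)) (t * (t-x))" by (rule inG_g[OF tv])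
  have nzX: "-(t-1)*x \<noteq> 0" "t * t * (t-1) \<noteq> 0" "-(t-x) \<noteq> 0" "t * (t-x) \<noteq> 0" using assms by auto
  have dX: "(-(t-1)*x) * (t * (t-x)) - (t * t * (t-1)) * (-(t-x)) \<noteq> 0"
  proof -
    have "(-(t-1)*x) * (t * (t-x)) - (t * t * (t-1)) * (-(t-x)) = t*(t-1)*(t-x)*(t-x)" by (simp add: algebra_simps)
    then show ?thesis using assms by auto
  qed
  obtain w11 w12 w22 where W: "inG t x w11 w12 0 w22" "w12 \<noteq> 0" "w11 * w22 \<noteq> 0"
    using U_one[OF T X nzX dX] by blast
  have U: "inG t x 1 \<gamma> 0 1" for \<gamma> by (rule U_all[OF T W])
  have all: "\<exists>k. k \<noteq> 0 \<and> mat k ** A \<in> gen_subgroup (gmat t x ` (UNIV - {0, 1, x}))" if A: "invertible A" for A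
  proof -
    have dA: "A$1$1 * A$2$2 - A$1$2 * A$2$1 \<noteq> 0" using A inv_iff_det by blast
    have "inG t x (A$1$1) (A$1$2) (A$2$1) (A$2$2)"
      by (rule all_inG[OF T U X nzX(3) dX dA])
    then obtain k where "k \<noteq> 0" "mk (k*A$1$1) (k*A$1$2) (k*A$2$1) (k*A$2$2) \<in> HH t x" unfolding inG_def by blast
    moreover have "mat k ** A = mk (k*A$1$1) (k*A$1$2) (k*A$2$1) (k*A$2$2)"
      by (subst mk_eta[of A]) (simp add: mat_mk_mult)
    ultimately show ?thesis unfolding HH_def by auto
  qed
  show ?thesis by (rule closure_full[OF PGL2_sub]) (rule all)
qed

end
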